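(* Assume in addition that $\mathrm{SNR}_i\ge\Gamma$ almost surely for all $i$, and that $R_i=R_{\max}$ with probability $q$ and $R_i=0$ with probability $1-q$, for some constants $R_{\max}>0$ and $q\in(0,1]$. Then $$\lambda^\star=\frac{q\,W T_{\mathrm{data}}R_{\max}}{\big(L-\tfrac12\big)T_{\mathrm{syn}}+\tfrac{T_{\mathrm{sib}}-T_{\mathrm{syn}}}{2}+q(T_{\mathrm{ra}}+T_{\mathrm{data}})},$$ and an optimal stopping rule is $N^\star=\min\{n\ge1: R_n\ge \frac{1}{1+\phi}R_{\max}\}$, where $$\phi=\frac{\big(L-\tfrac12\big)T_{\mathrm{syn}}+\tfrac{T_{\mathrm{sib}}-T_{\mathrm{syn}}}{2}}{q(T_{\mathrm{ra}}+T_{\mathrm{data}})}.$$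
   Context: Standing setup (cell search model). Fix constants $T_{\mathrm{syn}}>0$, $T_{\mathrm{sib}}\ge T_{\mathrm{syn}}$ with $T_{\mathrm{sib}}/T_{\mathrm{syn}}$ a positive integer, $T_{\mathrm{ra}}>0$, $T_{\mathrm{data}}>0$, $W>0$, an integer $L\ge1$, and a real threshold $\Gamma$. Let $(\mathrm{SNR}_i,\beta_i,Y_i,Z_i)_{i\ge1}$ be independent and identically distributed random tuples with $\mathrm{SNR}_i\ge0$, $\beta_i\in[0,1]$, $Y_i\ge0$ with $\mathbb{E}[Y_i]=T_{\mathrm{syn}}/2$, and $Z_i$ uniformly distributed on $\{jT_{\mathrm{syn}}: j=0,1,\dots,T_{\mathrm{sib}}/T_{\mathrm{syn}}-1\}$ and independent of $\mathrm{SNR}_i$. The selection metric of cell $i$ is $R_i=\beta_i\log(1+\mathrm{SNR}_i)$. For $n\ge1$ define $$T_n=\sum_{i=1}^n\Big(Y_i+(L-1)T_{\mathrm{syn}}+Z_i\,\mathbb{I}(\mathrm{SNR}_i\ge\Gamma)\Big)+T_{\mathrm{ra}}+T_{\mathrm{data}},\qquad U_n=W\,T_{\mathrm{data}}\max_{1\le i\le n}R_i\,\mathbb{I}(\mathrm{SNR}_i\ge\Gamma).$$ $\mathcal{C}$ denotes the set of stopping times $N\ge1$ with respect to the filtration generated by $(\mathrm{SNR}_i,\beta_i,Y_i,Z_i)_{i\le n}$ such that $\mathbb{E}[T_N]<\infty$, and $\lambda^\star=\sup_{N\in\mathcal{C}}\mathbb{E}[U_N]/\mathbb{E}[T_N]$.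 *)

theory Defs
  imports "HOL-Probability.Probability"
begin

definition Rmet :: "(nat \<Rightarrow> 'a \<Rightarrow> real) \<Rightarrow> (nat \<Rightarrow> 'a \<Rightarrow> real) \<Rightarrow> nat \<Rightarrow> 'a \<Rightarrow> real" where
  "Rmet SNR beta i \<omega> = beta i \<omega> * ln (1 + SNR i \<omega>)"

definition Tcost :: "(nat \<Rightarrow> 'a \<Rightarrow> real) \<Rightarrow> (nat \<Rightarrow> 'a \<Rightarrow> real) \<Rightarrow> (nat \<Rightarrow> 'a \<Rightarrow> real)
    \<Rightarrow> real \<Rightarrow> nat \<Rightarrow> real \<Rightarrow> real \<Rightarrow> real \<Rightarrow> nat \<Rightarrow> 'a \<Rightarrow> real" where
  "Tcost SNR Y Z Tsyn L \<Gamma> Tra Tdata n \<omega> =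
     (\<Sum>i=1..n. Y i \<omega> + (real L - 1) * Tsyn + Z i \<omega> * (if SNR i \<omega> \<ge> \<Gamma> then 1 else 0))
     + Tra + Tdata"

definition Ureward :: "(nat \<Rightarrow> 'a \<Rightarrow> real) \<Rightarrow> (nat \<Rightarrow> 'a \<Rightarrow> real) \<Rightarrow> real \<Rightarrow> real \<Rightarrow> real
    \<Rightarrow> nat \<Rightarrow> 'a \<Rightarrow> real" where
  "Ureward SNR beta \<Gamma> W Tdata n \<omega> =
     W * Tdata * Max ((\<lambda>i. Rmet SNR beta i \<omega> * (if SNR i \<omega> \<ge> \<Gamma> then 1 else 0)) ` {1..n})"

definition cs_filt :: "'a measure \<Rightarrow> (nat \<Rightarrow> 'a \<Rightarrow> real) \<Rightarrow> (nat \<Rightarrow> 'a \<Rightarrow> real)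
    \<Rightarrow> (nat \<Rightarrow> 'a \<Rightarrow> real) \<Rightarrow> (nat \<Rightarrow> 'a \<Rightarrow> real) \<Rightarrow> nat \<Rightarrow> 'a set set" where
  "cs_filt M SNR beta Y Z n = sigma_sets (space M)
     (\<Union>i\<in>{1..n}. \<Union>X\<in>{SNR i, beta i, Y i, Z i}. {X -` A \<inter> space M | A. A \<in> sets borel})"

definition stopping_time_ge1 :: "'a measure \<Rightarrow> (nat \<Rightarrow> 'a set set) \<Rightarrow> ('a \<Rightarrow> enat) \<Rightarrow> bool" where
  "stopping_time_ge1 M F N \<longleftrightarrow> (\<forall>\<omega>\<in>space M. N \<omega> \<ge> 1) \<and>
     (\<forall>n. {\<omega>\<in>space M. N \<omega> = enat n} \<in> F n)"

text \<open>Process stopped at N (used where N is finite).\<close>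
definition stopped :: "(nat \<Rightarrow> 'a \<Rightarrow> real) \<Rightarrow> ('a \<Rightarrow> enat) \<Rightarrow> 'a \<Rightarrow> real" where
  "stopped X N \<omega> = X (the_enat (N \<omega>)) \<omega>"

text \<open>The class C: stopping times N \<ge> 1 with E[T_N] < \<infinity> (so N is a.s. finite and T_N integrable,
  T_N being nonnegative).\<close>
definition classC :: "'a measure \<Rightarrow> (nat \<Rightarrow> 'a set set) \<Rightarrow> (nat \<Rightarrow> 'a \<Rightarrow> real) \<Rightarrow> ('a \<Rightarrow> enat) \<Rightarrow> bool" where
  "classC M F T N \<longleftrightarrow> stopping_time_ge1 M F N \<and> (AE \<omega> in M. N \<omega> \<noteq> \<infinity>)
     \<and> integrable M (stopped T N)"

definition ratio :: "'a measure \<Rightarrow> (nat \<Rightarrow> 'a \<Rightarrow> real) \<Rightarrow> (nat \<Rightarrow> 'a \<Rightarrow> real) \<Rightarrow> ('a \<Rightarrow> enat) \<Rightarrow> real" where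
  "ratio M T U N = (\<integral>\<omega>. stopped U N \<omega> \<partial>M) / (\<integral>\<omega>. stopped T N \<omega> \<partial>M)"

definition lam_star :: "'a measure \<Rightarrow> (nat \<Rightarrow> 'a set set) \<Rightarrow> (nat \<Rightarrow> 'a \<Rightarrow> real) \<Rightarrow> (nat \<Rightarrow> 'a \<Rightarrow> real) \<Rightarrow> real" where
  "lam_star M F T U = Sup {ratio M T U N | N. classC M F T N}"

definition first_exceed :: "(nat \<Rightarrow> 'a \<Rightarrow> real) \<Rightarrow> real \<Rightarrow> 'a \<Rightarrow> enat" where
  "first_exceed R c \<omega> = (if \<exists>n\<ge>1. R n \<omega> \<ge> c then enat (LEAST n. n \<ge> 1 \<and> R n \<omega> \<ge> c) else \<infinity>)"

end

theory Submission
  imports Defs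
begin



definition B4 :: "(real \<times> real \<times> real \<times> real) measure" where
  "B4 = borel \<Otimes>\<^sub>M borel \<Otimes>\<^sub>M borel \<Otimes>\<^sub>M borel"

lemma B4_borel: "B4 = borel"
  by (simp add: B4_def borel_prod)

locale csm = prob_space M
  for M :: "'a measure"
    and SNR beta Y Z :: "nat \<Rightarrow> 'a \<Rightarrow> real"
    and Tsyn Tsib Tra Tdata W \<Gamma> Rmax q :: real
    and L K :: nat +
  assumes Tsyn: "Tsyn > 0" and Tsib: "Tsib \<ge> Tsyn"
    and K: "K \<ge> 1" "Tsib = real K * Tsyn"
    and Tra: "Tra > 0" and Tdata: "Tdata > 0" and W: "W > 0" and L: "L \<ge> 1"
    and iid_indep: "prob_space.indep_vars M (\<lambda>_. borel)
          (\<lambda>i \<omega>. (SNR i \<omega>, beta i \<omega>, Y i \<omega>, Z i \<omega>)) {1..}"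
    and SNR_nonneg: "\<forall>i\<ge>1. AE \<omega> in M. SNR i \<omega> \<ge> 0"
    and beta_range: "\<forall>i\<ge>1. AE \<omega> in M. 0 \<le> beta i \<omega> \<and> beta i \<omega> \<le> 1"
    and Y_nonneg: "\<forall>i\<ge>1. AE \<omega> in M. Y i \<omega> \<ge> 0"
    and Y_mean: "\<forall>i\<ge>1. integrable M (Y i) \<and> (\<integral>\<omega>. Y i \<omega> \<partial>M) = Tsyn / 2"
    and Z_unif: "\<forall>i\<ge>1. \<forall>j<K. measure M {\<omega>\<in>space M. Z i \<omega> = real j * Tsyn} = 1 / real K"
    and SNR_Gamma: "\<forall>i\<ge>1. AE \<omega> in M. SNR i \<omega> \<ge> \<Gamma>"
    and Rmax: "Rmax > 0" and q: "0 < q" "q \<le> 1"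
    and R_dist: "\<forall>i\<ge>1. measure M {\<omega>\<in>space M. Rmet SNR beta i \<omega> = Rmax} = q
                     \<and> measure M {\<omega>\<in>space M. Rmet SNR beta i \<omega> = 0} = 1 - q"
begin

definition "V i \<omega> = (SNR i \<omega>, beta i \<omega>, Y i \<omega>, Z i \<omega>)"
definition "R = Rmet SNR beta"
definition "c i \<omega> = Y i \<omega> + (real L - 1) * Tsyn + Z i \<omega> * (if SNR i \<omega> \<ge> \<Gamma> then 1 else 0)"
definition "D = (real L - 1/2) * Tsyn + (Tsib - Tsyn) / 2"
definition "C = Tra + Tdata"
definition "gens n = (\<Union>i\<in>{1..n}. \<Union>X\<in>{SNR i, beta i, Y i, Z i}. {X -` A \<inter> space M | A. A \<in> sets borel})"
definition "Fm n = sigma (space M) (gens n)"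

lemma V_meas: "i \<ge> 1 \<Longrightarrow> V i \<in> measurable M B4"
  using iid_indep unfolding indep_vars_def V_def B4_borel by auto

lemma comps_meas:
  assumes "i \<ge> 1"
  shows "SNR i \<in> borel_measurable M" "beta i \<in> borel_measurable M"
        "Y i \<in> borel_measurable M" "Z i \<in> borel_measurable M"
proof -
  have v: "V i \<in> measurable M B4" using V_meas assms .
  have "(\<lambda>\<omega>. fst (V i \<omega>)) \<in> borel_measurable M" using v unfolding B4_def by measurable
  then show "SNR i \<in> borel_measurable M" by (simp add: V_def)
  have "(\<lambda>\<omega>. fst (snd (V i \<omega>))) \<in> borel_measurable M" using v unfolding B4_def by measurable
  then show "beta i \<in> borel_measurable M" by (simp add: V_def)
  have "(\<lambda>\<omega>. fst (snd (snd (V i \<omega>)))) \<in> borel_measurable M" using v unfolding B4_def by measurable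
  then show "Y i \<in> borel_measurable M" by (simp add: V_def)
  have "(\<lambda>\<omega>. snd (snd (snd (V i \<omega>)))) \<in> borel_measurable M" using v unfolding B4_def by measurable
  then show "Z i \<in> borel_measurable M" by (simp add: V_def)
qed

lemma gens_sub: "gens n \<subseteq> Pow (space M)"
  unfolding gens_def by auto

lemma sets_Fm: "sets (Fm n) = cs_filt M SNR beta Y Z n"
  unfolding Fm_def cs_filt_def gens_def[symmetric] using gens_sub by (simp add: sets_measure_of)

lemma space_Fm: "space (Fm n) = space M"
  unfolding Fm_def using gens_sub by simp

lemma gens_events: "gens n \<subseteq> events"
proof
  fix S assume "S \<in> gens n"
  then obtain i X A where i: "i \<in> {1..n}" and X: "X \<in> {SNR i, beta i, Y i, Z i}"
    and A: "A \<in> sets borel" and S: "S = X -` A \<inter> space M"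
    unfolding gens_def by blast
  have "X \<in> borel_measurable M" using X comps_meas[of i] i by auto
  then show "S \<in> events" using S A by (simp add: measurable_sets)
qed

lemma Fm_events: "sets (Fm n) \<subseteq> events"
  unfolding Fm_def using gens_sub gens_events by (simp add: sets_measure_of sets.sigma_sets_subset)

lemma Fm_mono: "m \<le> n \<Longrightarrow> sets (Fm m) \<subseteq> sets (Fm n)"
proof -
  assume "m \<le> n"
  then have "gens m \<subseteq> gens n" unfolding gens_def by (intro UN_mono) auto
  then show ?thesis unfolding Fm_def using gens_sub
    by (simp add: sets_measure_of sigma_sets_mono')
qed

lemma comps_Fm:
  assumes "1 \<le> i" "i \<le> n"
  shows "SNR i \<in> borel_measurable (Fm n)" "beta i \<in> borel_measurable (Fm n)"
        "Y i \<in> borel_measurable (Fm n)" "Z i \<in> borel_measurable (Fm n)"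
proof -
  have *: "X -` A \<inter> space (Fm n) \<in> sets (Fm n)" if "X \<in> {SNR i, beta i, Y i, Z i}" "A \<in> sets borel" for X A
  proof -
    have "X -` A \<inter> space M \<in> gens n" unfolding gens_def
      apply (rule UN_I[where a=i]) using assms apply simp
      apply (rule UN_I[where a=X]) using that by auto
    then show ?thesis unfolding space_Fm Fm_def using gens_sub
      by (simp add: sets_measure_of sigma_sets.Basic)
  qed
  show "SNR i \<in> borel_measurable (Fm n)" "beta i \<in> borel_measurable (Fm n)"
        "Y i \<in> borel_measurable (Fm n)" "Z i \<in> borel_measurable (Fm n)"
    by (rule measurableI, simp, rule *, simp, simp)+
qed

end


context csm begin

definition "E i = {V i -` B \<inter> space M | B. B \<in> sets borel}"

lemma E_events: "i \<ge> 1 \<Longrightarrow> E i \<subseteq> events"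
  unfolding E_def using V_meas[of i] unfolding B4_borel by (auto intro: measurable_sets)

lemma indep_E: "indep_sets E {1..}"
proof -
  have "indep_sets (\<lambda>i. sigma_sets (space M) (E i)) {1..}"
    using iid_indep unfolding indep_vars_def E_def V_def by simp
  then show ?thesis
    by (rule indep_sets_mono_sets) (auto intro: sigma_sets.Basic)
qed

lemma Int_stable_E: "Int_stable (E i)"
  unfolding Int_stable_def E_def
proof safe
  fix B1 B2 :: "(real \<times> real \<times> real \<times> real) set" assume "B1 \<in> sets borel" "B2 \<in> sets borel"
  then show "\<exists>B. V i -` B1 \<inter> space M \<inter> (V i -` B2 \<inter> space M) = V i -` B \<inter> space M \<and> B \<in> sets borel"
    by (intro exI[of _ "B1 \<inter> B2"]) auto
qed

definition "S1 j = sigma_sets (space M) (\<Union>i\<in>{1..j}. E i)"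

lemma indep_S1: "indep_set (S1 j) (sigma_sets (space M) (E (Suc j)))"
proof -
  let ?I = "\<lambda>b::bool. if b then {1..j} else {Suc j}"
  have "indep_sets E (\<Union>b\<in>UNIV. ?I b)"
    by (rule indep_sets_mono_index[OF _ indep_E]) auto
  then have "indep_sets (\<lambda>b. sigma_sets (space M) (\<Union>i\<in>?I b. E i)) UNIV"
    by (rule indep_sets_collect_sigma) (auto simp: Int_stable_E disjoint_family_on_def)
  moreover have "(\<lambda>b. sigma_sets (space M) (\<Union>i\<in>?I b. E i)) = case_bool (S1 j) (sigma_sets (space M) (E (Suc j)))"
    by (auto simp: fun_eq_iff S1_def split: bool.split)
  ultimately show ?thesis unfolding indep_set_def by simp
qed

lemma gens_S1: "gens j \<subseteq> S1 j"
proof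
  fix S assume "S \<in> gens j"
  then obtain i X A where i: "i \<in> {1..j}" and X: "X \<in> {SNR i, beta i, Y i, Z i}"
    and A: "A \<in> sets borel" and S: "S = X -` A \<inter> space M"
    unfolding gens_def by blast
  have "\<exists>f. f \<in> measurable B4 borel \<and> X = (\<lambda>\<omega>. f (V i \<omega>))"
  proof -
    have "X = SNR i \<or> X = beta i \<or> X = Y i \<or> X = Z i" using X by simp
    then show ?thesis
    proof (elim disjE)
      assume "X = SNR i" then show ?thesis
        by (intro exI[of _ "\<lambda>x. fst x"]) (auto simp: B4_def V_def)
    next
      assume "X = beta i" then show ?thesis
        by (intro exI[of _ "\<lambda>x. fst (snd x)"]) (auto simp: B4_def V_def)
    next
      assume "X = Y i" then show ?thesis
        by (intro exI[of _ "\<lambda>x. fst (snd (snd x))"]) (auto simp: B4_def V_def)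
    next
      assume "X = Z i" then show ?thesis
        by (intro exI[of _ "\<lambda>x. snd (snd (snd x))"]) (auto simp: B4_def V_def)
    qed
  qed
  then obtain f where f: "f \<in> measurable B4 borel" and Xf: "X = (\<lambda>\<omega>. f (V i \<omega>))" by blast
  have fA: "f -` A \<in> sets borel"
    using measurable_sets[OF f A] by (simp add: B4_borel)
  have "S = V i -` (f -` A) \<inter> space M" using S Xf by auto
  then have "S \<in> E i" unfolding E_def using fA by blast
  then show "S \<in> S1 j" unfolding S1_def using i by (blast intro: sigma_sets.Basic)
qed

lemma E_sub: "\<And>j. (\<Union>i\<in>{1..j}. E i) \<subseteq> Pow (space M)"
  unfolding E_def by auto

lemma Fm_S1: "sets (Fm j) \<subseteq> S1 j"
proof -
  interpret s: sigma_algebra "space M" "S1 j"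
    unfolding S1_def by (rule sigma_algebra_sigma_sets[OF E_sub])
  show ?thesis unfolding Fm_def using gens_sub gens_S1
    by (simp add: sets_measure_of s.sigma_sets_subset)
qed

lemma indep_ind:
  assumes A: "A \<in> sets (Fm j)" and g: "g \<in> measurable B4 (borel :: real measure)"
  shows "indep_var borel (indicator A :: 'a \<Rightarrow> real) borel (\<lambda>\<omega>. g (V (Suc j) \<omega>))"
proof -
  have Aev: "A \<in> events" using A Fm_events by auto
  have AS1: "A \<in> S1 j" using A Fm_S1 by auto
  have Asp: "A \<subseteq> space M" using Aev sets.sets_into_space by auto
  interpret s: sigma_algebra "space M" "S1 j"
    unfolding S1_def by (rule sigma_algebra_sigma_sets[OF E_sub])
  have gen1: "{indicator A -` B \<inter> space M | B. B \<in> sets (borel :: real measure)} \<subseteq> S1 j"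
  proof safe
    fix B :: "real set"
    have "indicator A -` B \<inter> space M = (if 1 \<in> B then A else {}) \<union> (if 0 \<in> B then space M - A else {})"
      using Asp by (auto simp: indicator_def of_bool_def split: if_splits)
    then show "indicator A -` B \<inter> space M \<in> S1 j"
      using AS1 by (auto intro!: s.Un s.compl_sets)
  qed
  have sub1: "sigma_sets (space M) {indicator A -` B \<inter> space M | B. B \<in> sets (borel :: real measure)} \<subseteq> S1 j"
    by (rule s.sigma_sets_subset[OF gen1])
  have gen2: "{(\<lambda>\<omega>. g (V (Suc j) \<omega>)) -` B \<inter> space M | B. B \<in> sets (borel :: real measure)} \<subseteq> E (Suc j)"
  proof safe
    fix B :: "real set" assume B: "B \<in> sets borel"
    have gB: "g -` B \<in> sets borel" using measurable_sets[OF g B] by (simp add: B4_borel)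
    have "(\<lambda>\<omega>. g (V (Suc j) \<omega>)) -` B \<inter> space M = V (Suc j) -` (g -` B) \<inter> space M" by auto
    then show "(\<lambda>\<omega>. g (V (Suc j) \<omega>)) -` B \<inter> space M \<in> E (Suc j)" unfolding E_def using gB by blast
  qed
  have sub2: "sigma_sets (space M) {(\<lambda>\<omega>. g (V (Suc j) \<omega>)) -` B \<inter> space M | B. B \<in> sets (borel :: real measure)}
     \<subseteq> sigma_sets (space M) (E (Suc j))"
    by (rule sigma_sets_mono) (use gen2 in \<open>auto intro: sigma_sets.Basic\<close>)
  have ind: "indep_set (S1 j) (sigma_sets (space M) (E (Suc j)))" by (rule indep_S1)
  have rv1: "random_variable borel (indicator A :: 'a \<Rightarrow> real)" using Aev by simp
  have rv2: "random_variable borel (\<lambda>\<omega>. g (V (Suc j) \<omega>))"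
    using measurable_comp[OF V_meas[of "Suc j"] g] by (simp add: comp_def)
  show ?thesis
    unfolding indep_var_eq using rv1 rv2 ind sub1 sub2 unfolding indep_sets2_eq by blast
qed

lemma indep_int:
  assumes A: "A \<in> sets (Fm j)" and g: "g \<in> borel_measurable B4"
    and int: "integrable M (\<lambda>\<omega>. g (V (Suc j) \<omega>))"
  shows "(\<integral>\<omega>. indicator A \<omega> * g (V (Suc j) \<omega>) \<partial>M) = prob A * (\<integral>\<omega>. g (V (Suc j) \<omega>) \<partial>M)"
proof -
  have Aev: "A \<in> events" using A Fm_events by auto
  have "indep_var borel (indicator A :: 'a \<Rightarrow> real) borel (\<lambda>\<omega>. g (V (Suc j) \<omega>))"
    by (rule indep_ind[OF A g])
  moreover have "integrable M (indicator A :: 'a \<Rightarrow> real)"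
    using Aev by (intro integrable_real_indicator) (auto simp: less_top[symmetric])
  ultimately show ?thesis using int by (simp add: indep_var_lebesgue_integral Aev)
qed

end



lemma sum_real_lessThan: "(\<Sum>j<K. real j) = real K * (real K - 1) / 2"
  by (induction K) (auto simp: field_simps)

context csm begin

lemma Zset_ev: "i \<ge> 1 \<Longrightarrow> {\<omega>\<in>space M. Z i \<omega> = x} \<in> events"
  using comps_meas(4)[of i] by measurable

lemma Zvals: assumes i: "i \<ge> 1" shows "AE \<omega> in M. \<exists>j<K. Z i \<omega> = real j * Tsyn"
proof -
  let ?S = "\<lambda>j::nat. {\<omega>\<in>space M. Z i \<omega> = real j * Tsyn}"
  have "prob (\<Union>j\<in>{..<K}. ?S j) = (\<Sum>j\<in>{..<K}. prob (?S j))"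
  proof (rule measure_finite_Union)
    show "?S ` {..<K} \<subseteq> events" using Zset_ev[OF i] by auto
    show "disjoint_family_on ?S {..<K}"
      unfolding disjoint_family_on_def using Tsyn by auto
  qed (auto simp: emeasure_finite)
  also have "\<dots> = (\<Sum>j\<in>{..<K}. 1 / real K)" using Z_unif i by simp
  also have "\<dots> = 1" using K by simp
  finally have "AE \<omega> in M. \<omega> \<in> (\<Union>j\<in>{..<K}. ?S j)" by (rule AE_prob_1)
  then show ?thesis by auto
qed

lemma Z_nonneg: assumes i: "i \<ge> 1" shows "AE \<omega> in M. Z i \<omega> \<ge> 0"
  using Zvals[OF i] by eventually_elim (use Tsyn in auto)

lemma Z_int: assumes i: "i \<ge> 1"
  shows "integrable M (Z i)" "(\<integral>\<omega>. Z i \<omega> \<partial>M) = (real K - 1) * Tsyn / 2"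
proof -
  let ?S = "\<lambda>j::nat. {\<omega>\<in>space M. Z i \<omega> = real j * Tsyn}"
  let ?f = "\<lambda>\<omega>. \<Sum>j<K. real j * Tsyn * indicator (?S j) \<omega>"
  have Sev: "\<And>j. ?S j \<in> events" using Zset_ev[OF i] .
  have fm: "?f \<in> borel_measurable M" using Sev by measurable
  have Zm: "Z i \<in> borel_measurable M" using comps_meas(4)[OF i] .
  have ae: "AE \<omega> in M. Z i \<omega> = ?f \<omega>"
    using Zvals[OF i] AE_space
  proof eventually_elim
    case (elim \<omega>)
    then obtain j0 where j0: "j0 < K" "Z i \<omega> = real j0 * Tsyn" by blast
    have "?f \<omega> = (\<Sum>j<K. if j = j0 then real j * Tsyn else 0)"
    proof (rule sum.cong)
      fix j assume "j \<in> {..<K}"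
      show "real j * Tsyn * indicator (?S j) \<omega> = (if j = j0 then real j * Tsyn else 0)"
        using j0 Tsyn elim by (auto simp: indicator_def)
    qed simp
    also have "\<dots> = real j0 * Tsyn" using j0 by simp
    finally show ?case using j0 by simp
  qed
  have fi: "integrable M ?f"
    apply (rule Bochner_Integration.integrable_sum, rule integrable_mult_right, rule integrable_real_indicator)
    using Sev by (auto simp: less_top[symmetric] emeasure_finite)
  show "integrable M (Z i)" using integrable_cong_AE[OF Zm fm ae] fi by simp
  have "(\<integral>\<omega>. Z i \<omega> \<partial>M) = (\<integral>\<omega>. ?f \<omega> \<partial>M)" by (rule integral_cong_AE[OF Zm fm ae])
  also have "\<dots> = (\<Sum>j<K. real j * Tsyn * prob (?S j))"
    using Sev by (subst Bochner_Integration.integral_sum) (auto simp: less_top[symmetric] emeasure_finite)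
  also have "\<dots> = (\<Sum>j<K. real j * (Tsyn / real K))" using Z_unif i by simp
  also have "\<dots> = (\<Sum>j<K. real j) * (Tsyn / real K)" by (rule sum_distrib_right[symmetric])
  also have "\<dots> = (real K - 1) * Tsyn / 2" using K by (simp add: sum_real_lessThan field_simps)
  finally show "(\<integral>\<omega>. Z i \<omega> \<partial>M) = (real K - 1) * Tsyn / 2" .
qed

definition "gR = (\<lambda>(s::real, b::real, y::real, z::real). b * ln (1 + s))"
definition "gc = (\<lambda>(s::real, b::real, y::real, z::real). y + (real L - 1) * Tsyn + z * (if s \<ge> \<Gamma> then 1 else 0))"

lemma gR_meas: "gR \<in> borel_measurable B4" unfolding gR_def B4_def by measurable
lemma gc_meas: "gc \<in> borel_measurable B4" unfolding gc_def B4_def by measurable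

lemma R_V: "R i \<omega> = gR (V i \<omega>)" unfolding R_def Rmet_def gR_def V_def by simp
lemma c_V: "c i \<omega> = gc (V i \<omega>)" unfolding c_def gc_def V_def by simp

lemma R_meas: "i \<ge> 1 \<Longrightarrow> R i \<in> borel_measurable M"
  using measurable_comp[OF V_meas gR_meas] by (simp add: comp_def R_V[abs_def])
lemma c_meas: "i \<ge> 1 \<Longrightarrow> c i \<in> borel_measurable M"
  using measurable_comp[OF V_meas gc_meas] by (simp add: comp_def c_V[abs_def])

lemma Rset_ev: "i \<ge> 1 \<Longrightarrow> {\<omega>\<in>space M. R i \<omega> = x} \<in> events"
  using R_meas[of i] by measurable

lemma Rvals: assumes i: "i \<ge> 1" shows "AE \<omega> in M. R i \<omega> = 0 \<or> R i \<omega> = Rmax"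
proof -
  let ?A = "{\<omega>\<in>space M. R i \<omega> = Rmax}" and ?B = "{\<omega>\<in>space M. R i \<omega> = 0}"
  have "prob (?A \<union> ?B) = prob ?A + prob ?B"
    using Rset_ev[OF i] Rmax by (intro measure_Union) (auto simp: emeasure_finite)
  also have "\<dots> = 1" using R_dist i unfolding R_def by simp
  finally have "AE \<omega> in M. \<omega> \<in> ?A \<union> ?B" by (rule AE_prob_1)
  then show ?thesis by auto
qed

lemma prob_R: "i \<ge> 1 \<Longrightarrow> prob {\<omega>\<in>space M. R i \<omega> = Rmax} = q"
  using R_dist unfolding R_def by simp

lemma D_eq: "D = Tsyn / 2 + (real L - 1) * Tsyn + (real K - 1) * Tsyn / 2"
  unfolding D_def using K by (simp add: field_simps)

lemma D_pos: "D > 0"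
  unfolding D_eq using Tsyn K L by (auto intro!: add_pos_nonneg)

lemma C_pos: "C > 0" unfolding C_def using Tra Tdata by simp

lemma c_props: assumes i: "i \<ge> 1"
  shows "integrable M (c i)" "(\<integral>\<omega>. c i \<omega> \<partial>M) = D" "AE \<omega> in M. c i \<omega> \<ge> 0"
proof -
  have ae: "AE \<omega> in M. c i \<omega> = Y i \<omega> + (real L - 1) * Tsyn + Z i \<omega>"
    using SNR_Gamma i by (auto simp: c_def)
  have m1: "c i \<in> borel_measurable M" using c_meas[OF i] .
  have m2: "(\<lambda>\<omega>. Y i \<omega> + (real L - 1) * Tsyn + Z i \<omega>) \<in> borel_measurable M"
    using comps_meas[OF i] by measurable
  have int2: "integrable M (\<lambda>\<omega>. Y i \<omega> + (real L - 1) * Tsyn + Z i \<omega>)"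
    using Y_mean i Z_int[OF i] by auto
  show "integrable M (c i)" using integrable_cong_AE[OF m1 m2 ae] int2 by simp
  have "(\<integral>\<omega>. c i \<omega> \<partial>M) = (\<integral>\<omega>. Y i \<omega> + (real L - 1) * Tsyn + Z i \<omega> \<partial>M)"
    by (rule integral_cong_AE[OF m1 m2 ae])
  also have "\<dots> = (\<integral>\<omega>. Y i \<omega> \<partial>M) + (real L - 1) * Tsyn + (\<integral>\<omega>. Z i \<omega> \<partial>M)"
    using Y_mean i Z_int[OF i] by (simp add: integral_add prob_space del: Z_int)
  also have "\<dots> = Tsyn / 2 + (real L - 1) * Tsyn + (real K - 1) * Tsyn / 2"
  proof -
    have eY: "(\<integral>\<omega>. Y i \<omega> \<partial>M) = Tsyn / 2" using Y_mean i by auto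
    show ?thesis by (simp only: eY Z_int(2)[OF i])
  qed
  finally show "(\<integral>\<omega>. c i \<omega> \<partial>M) = D" unfolding D_eq .
  show "AE \<omega> in M. c i \<omega> \<ge> 0"
    using ae Y_nonneg[rule_format, OF i] Z_nonneg[OF i]
  proof eventually_elim
    case (elim \<omega>) then show ?case using L Tsyn by (auto intro!: add_nonneg_nonneg)
  qed
qed

definition "good \<omega> \<longleftrightarrow> (\<forall>i\<ge>1. c i \<omega> \<ge> 0 \<and> \<Gamma> \<le> SNR i \<omega> \<and> (R i \<omega> = 0 \<or> R i \<omega> = Rmax))"

lemma AE_good: "AE \<omega> in M. good \<omega>"
proof -
  have "\<forall>i. AE \<omega> in M. i \<ge> 1 \<longrightarrow> (c i \<omega> \<ge> 0 \<and> \<Gamma> \<le> SNR i \<omega> \<and> (R i \<omega> = 0 \<or> R i \<omega> = Rmax))"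
  proof
    fix i :: nat
    show "AE \<omega> in M. i \<ge> 1 \<longrightarrow> (c i \<omega> \<ge> 0 \<and> \<Gamma> \<le> SNR i \<omega> \<and> (R i \<omega> = 0 \<or> R i \<omega> = Rmax))"
    proof (cases "i \<ge> 1")
      case True
      show ?thesis using c_props(3)[OF True] SNR_Gamma True Rvals[OF True] by auto
    qed simp
  qed
  then have "AE \<omega> in M. \<forall>i. i \<ge> 1 \<longrightarrow> (c i \<omega> \<ge> 0 \<and> \<Gamma> \<le> SNR i \<omega> \<and> (R i \<omega> = 0 \<or> R i \<omega> = Rmax))"
    by (subst AE_all_countable)
  then show ?thesis unfolding good_def by simp
qed

end


context csm begin

abbreviation "ST N \<equiv> stopping_time_ge1 M (cs_filt M SNR beta Y Z) N"
definition "TT = Tcost SNR Y Z Tsyn L \<Gamma> Tra Tdata"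
definition "UU = Ureward SNR beta \<Gamma> W Tdata"

lemma st_eq: "ST N \<Longrightarrow> {\<omega>\<in>space M. N \<omega> = enat n} \<in> sets (Fm n)"
  unfolding stopping_time_ge1_def sets_Fm by auto

lemma st_ge1: "ST N \<Longrightarrow> \<omega> \<in> space M \<Longrightarrow> N \<omega> \<ge> 1"
  unfolding stopping_time_ge1_def by auto

lemma st_ge: assumes st: "ST N" shows "{\<omega>\<in>space M. enat (Suc j) \<le> N \<omega>} \<in> sets (Fm j)"
proof -
  have eq: "{\<omega>\<in>space M. enat (Suc j) \<le> N \<omega>} = space (Fm j) - (\<Union>n\<in>{..j}. {\<omega>\<in>space M. N \<omega> = enat n})"
  proof (rule set_eqI)
    fix \<omega>
    show "\<omega> \<in> {\<omega>\<in>space M. enat (Suc j) \<le> N \<omega>} \<longleftrightarrow> \<omega> \<in> space (Fm j) - (\<Union>n\<in>{..j}. {\<omega>\<in>space M. N \<omega> = enat n})"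
      unfolding space_Fm by (cases "N \<omega>") auto
  qed
  have "\<And>n. n \<in> {..j} \<Longrightarrow> {\<omega>\<in>space M. N \<omega> = enat n} \<in> sets (Fm j)"
    using st_eq[OF st] Fm_mono by auto
  then show ?thesis unfolding eq by (intro sets.Diff sets.top sets.finite_UN) auto
qed

lemma st_ge_ev: "ST N \<Longrightarrow> {\<omega>\<in>space M. enat (Suc j) \<le> N \<omega>} \<in> events"
  using st_ge Fm_events by auto

lemma st_meas: assumes st: "ST N" shows "N \<in> measurable M (count_space UNIV)"
  unfolding measurable_count_space_eq2_countable
proof safe
  fix a :: enat
  show "N -` {a} \<inter> space M \<in> events"
  proof (cases a)
    case (enat n)
    have "N -` {a} \<inter> space M = {\<omega>\<in>space M. N \<omega> = enat n}" using enat by auto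
    then show ?thesis using st_eq[OF st, of n] Fm_events by auto
  next
    case infinity
    have "N -` {a} \<inter> space M = space M - (\<Union>n. {\<omega>\<in>space M. N \<omega> = enat n})"
    proof (rule set_eqI)
      fix \<omega> show "\<omega> \<in> N -` {a} \<inter> space M \<longleftrightarrow> \<omega> \<in> space M - (\<Union>n. {\<omega>\<in>space M. N \<omega> = enat n})"
        using infinity by (cases "N \<omega>") auto
    qed
    moreover have "(\<Union>n. {\<omega>\<in>space M. N \<omega> = enat n}) \<in> events"
      using st_eq[OF st] Fm_events by (intro sets.countable_UN) auto
    ultimately show ?thesis by auto
  qed
qed auto

lemma TT_c: "TT n \<omega> = (\<Sum>i=1..n. c i \<omega>) + C"
  unfolding TT_def Tcost_def c_def C_def by simp

lemma TT_meas: "TT n \<in> borel_measurable M"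
proof -
  have "(\<lambda>\<omega>. (\<Sum>i=1..n. c i \<omega>) + C) \<in> borel_measurable M"
    using c_meas by (intro borel_measurable_add borel_measurable_sum) auto
  then show ?thesis by (simp add: TT_c[abs_def])
qed

lemma UU_meas: "UU n \<in> borel_measurable M"
proof -
  have "(\<lambda>\<omega>. Max ((\<lambda>i. Rmet SNR beta i \<omega> * (if SNR i \<omega> \<ge> \<Gamma> then 1 else 0)) ` {1..n})) \<in> borel_measurable M"
  proof (rule borel_measurable_Max)
    fix i assume "i \<in> {1..n}"
    then have i: "i \<ge> 1" by auto
    show "(\<lambda>\<omega>. Rmet SNR beta i \<omega> * (if SNR i \<omega> \<ge> \<Gamma> then 1 else 0)) \<in> borel_measurable M"
      using R_meas[OF i] comps_meas[OF i] unfolding R_def by measurable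
  qed simp
  then show ?thesis unfolding UU_def Ureward_def by measurable
qed

lemma stopped_meas:
  assumes st: "ST N" and X: "\<And>n. X n \<in> borel_measurable M"
  shows "stopped X N \<in> borel_measurable M"
proof -
  have "(\<lambda>\<omega>. (\<lambda>k \<omega>. X (the_enat k) \<omega>) (N \<omega>) \<omega>) \<in> borel_measurable M"
    by (rule measurable_compose_countable[OF _ st_meas[OF st]]) (rule X)
  then show ?thesis unfolding stopped_def by simp
qed

end


context csm begin

definition "G N j = {\<omega>\<in>space M. enat (Suc j) \<le> N \<omega>}"

lemma c_Suc_props: "integrable M (c (Suc j))" "(\<integral>\<omega>. c (Suc j) \<omega> \<partial>M) = D" "AE \<omega> in M. c (Suc j) \<omega> \<ge> 0"
  using c_props[of "Suc j"] by auto

lemma nn_TT: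
  assumes st: "ST N" and fin: "AE \<omega> in M. N \<omega> \<noteq> \<infinity>"
  shows "(\<integral>\<^sup>+\<omega>. ennreal (stopped TT N \<omega>) \<partial>M) = ennreal C + ennreal D * (\<Sum>j. ennreal (prob (G N j)))"
proof -
  have Gev: "\<And>j. G N j \<in> events" unfolding G_def using st_ge_ev[OF st] .
  have ae: "AE \<omega> in M. ennreal (stopped TT N \<omega>) = ennreal C + (\<Sum>j. ennreal (indicator (G N j) \<omega> * c (Suc j) \<omega>))"
    using AE_good fin AE_space
  proof eventually_elim
    case (elim \<omega>)
    then obtain n where n: "N \<omega> = enat n" by (cases "N \<omega>") auto
    have cn: "\<And>i. i \<ge> 1 \<Longrightarrow> c i \<omega> \<ge> 0" using elim(1) unfolding good_def by auto
    have "(\<Sum>j. ennreal (indicator (G N j) \<omega> * c (Suc j) \<omega>)) = (\<Sum>j<n. ennreal (indicator (G N j) \<omega> * c (Suc j) \<omega>))"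
      by (rule suminf_finite) (auto simp: G_def n indicator_def)
    also have "\<dots> = (\<Sum>j<n. ennreal (c (Suc j) \<omega>))"
      using elim(3) by (intro sum.cong) (auto simp: G_def n indicator_def)
    also have "\<dots> = ennreal (\<Sum>j<n. c (Suc j) \<omega>)" using cn by (intro sum_ennreal) auto
    also have "(\<Sum>j<n. c (Suc j) \<omega>) = (\<Sum>i=1..n. c i \<omega>)" by (simp add: sum.atLeast1_atMost_eq)
    finally have s: "(\<Sum>j. ennreal (indicator (G N j) \<omega> * c (Suc j) \<omega>)) = ennreal (\<Sum>i=1..n. c i \<omega>)" .
    have nn: "(\<Sum>i=1..n. c i \<omega>) \<ge> 0" using cn by (intro sum_nonneg) auto
    have "stopped TT N \<omega> = (\<Sum>i=1..n. c i \<omega>) + C" unfolding stopped_def n TT_c by simp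
    then show ?case using s nn C_pos by (simp add: ennreal_plus add.commute)
  qed
  have mterm: "\<And>j. (\<lambda>\<omega>. ennreal (indicator (G N j) \<omega> * c (Suc j) \<omega>)) \<in> borel_measurable M"
    using Gev c_meas by measurable
  have "(\<integral>\<^sup>+\<omega>. ennreal (stopped TT N \<omega>) \<partial>M) = (\<integral>\<^sup>+\<omega>. ennreal C + (\<Sum>j. ennreal (indicator (G N j) \<omega> * c (Suc j) \<omega>)) \<partial>M)"
    by (rule nn_integral_cong_AE[OF ae])
  also have "\<dots> = (\<integral>\<^sup>+\<omega>. ennreal C \<partial>M) + (\<integral>\<^sup>+\<omega>. (\<Sum>j. ennreal (indicator (G N j) \<omega> * c (Suc j) \<omega>)) \<partial>M)"
    using mterm by (intro nn_integral_add) auto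
  also have "(\<integral>\<^sup>+\<omega>. ennreal C \<partial>M) = ennreal C" by (simp add: emeasure_space_1)
  also have "(\<integral>\<^sup>+\<omega>. (\<Sum>j. ennreal (indicator (G N j) \<omega> * c (Suc j) \<omega>)) \<partial>M)
      = (\<Sum>j. \<integral>\<^sup>+\<omega>. ennreal (indicator (G N j) \<omega> * c (Suc j) \<omega>) \<partial>M)"
    using mterm by (intro nn_integral_suminf) auto
  also have "\<dots> = (\<Sum>j. ennreal D * ennreal (prob (G N j)))"
  proof (rule suminf_cong)
    fix j
    have int: "integrable M (\<lambda>\<omega>. indicator (G N j) \<omega> * c (Suc j) \<omega>)"
      using integrable_real_mult_indicator[OF Gev c_Suc_props(1), of j] by (simp add: mult.commute)
    have "AE \<omega> in M. 0 \<le> indicator (G N j) \<omega> * c (Suc j) \<omega>"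
      using c_Suc_props(3)[of j] by eventually_elim auto
    then have "(\<integral>\<^sup>+\<omega>. ennreal (indicator (G N j) \<omega> * c (Suc j) \<omega>) \<partial>M) = ennreal (\<integral>\<omega>. indicator (G N j) \<omega> * c (Suc j) \<omega> \<partial>M)"
      using int by (rule nn_integral_eq_integral[rotated])
    also have "(\<integral>\<omega>. indicator (G N j) \<omega> * c (Suc j) \<omega> \<partial>M) = prob (G N j) * (\<integral>\<omega>. c (Suc j) \<omega> \<partial>M)"
      using indep_int[OF st_ge[OF st, of j, folded G_def] gc_meas] c_Suc_props(1)[of j]
      by (simp add: c_V[symmetric])
    also have "\<dots> = D * prob (G N j)" using c_Suc_props(2)[of j] by simp
    finally show "(\<integral>\<^sup>+\<omega>. ennreal (indicator (G N j) \<omega> * c (Suc j) \<omega>) \<partial>M) = ennreal D * ennreal (prob (G N j))"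
      using D_pos by (simp add: ennreal_mult)
  qed
  also have "\<dots> = ennreal D * (\<Sum>j. ennreal (prob (G N j)))" by (rule ennreal_suminf_cmult)
  finally show ?thesis .
qed

end


context csm begin

definition "Rne j = {\<omega>\<in>space M. \<forall>k\<in>{1..j}. R k \<omega> \<noteq> Rmax}"
definition "P N j = G N j \<inter> Rne j"
definition "Rs j = {\<omega>\<in>space M. R j \<omega> = Rmax}"
definition "Bs N j = P N j \<inter> Rs (Suc j)"
definition "EN N = {\<omega>\<in>space M. \<exists>j. enat (Suc j) \<le> N \<omega> \<and> R (Suc j) \<omega> = Rmax}"

lemma R_Fm: "1 \<le> k \<Longrightarrow> k \<le> j \<Longrightarrow> R k \<in> borel_measurable (Fm j)"
  using comps_Fm[of k j] unfolding R_def Rmet_def by measurable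

lemma Rne_Fm: "Rne j \<in> sets (Fm j)"
proof -
  have eq: "Rne j = space (Fm j) - (\<Union>k\<in>{1..j}. {\<omega>\<in>space (Fm j). R k \<omega> = Rmax})"
    unfolding Rne_def space_Fm by auto
  have "\<And>k. k \<in> {1..j} \<Longrightarrow> {\<omega>\<in>space (Fm j). R k \<omega> = Rmax} \<in> sets (Fm j)"
    using R_Fm by measurable
  then show ?thesis unfolding eq by (intro sets.Diff sets.top sets.finite_UN) auto
qed

lemma P_Fm: "ST N \<Longrightarrow> P N j \<in> sets (Fm j)"
  unfolding P_def G_def using st_ge Rne_Fm by auto

lemma Rs_ev: "j \<ge> 1 \<Longrightarrow> Rs j \<in> events"
  unfolding Rs_def using Rset_ev .

definition "gI x = (if gR x = Rmax then 1 else (0::real))"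

lemma gI_meas: "gI \<in> borel_measurable B4"
  unfolding gI_def using gR_meas by measurable

lemma indep_event:
  assumes A: "A \<in> sets (Fm j)"
  shows "prob (A \<inter> Rs (Suc j)) = prob A * q"
proof -
  have Aev: "A \<in> events" using A Fm_events by auto
  have Asp: "A \<subseteq> space M" using Aev sets.sets_into_space by auto
  have Rsev: "Rs (Suc j) \<in> events" using Rs_ev by simp
  have eq1: "\<And>\<omega>. \<omega> \<in> space M \<Longrightarrow> gI (V (Suc j) \<omega>) = indicator (Rs (Suc j)) \<omega>"
    unfolding gI_def Rs_def by (simp add: R_V indicator_def)
  have eq2: "\<And>\<omega>. \<omega> \<in> space M \<Longrightarrow> indicator A \<omega> * gI (V (Suc j) \<omega>) = indicator (A \<inter> Rs (Suc j)) \<omega>"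
    using eq1 by (simp add: indicator_inter_arith)
  have int1: "integrable M (\<lambda>\<omega>. gI (V (Suc j) \<omega>))"
    using Rsev by (subst Bochner_Integration.integrable_cong[OF refl eq1]) (auto simp: less_top[symmetric] emeasure_finite)
  have "prob (A \<inter> Rs (Suc j)) = (\<integral>\<omega>. indicator (A \<inter> Rs (Suc j)) \<omega> \<partial>M)"
    using Aev Rsev by (simp add: emeasure_finite)
  also have "\<dots> = (\<integral>\<omega>. indicator A \<omega> * gI (V (Suc j) \<omega>) \<partial>M)"
    by (rule Bochner_Integration.integral_cong[OF refl eq2[symmetric]])
  also have "\<dots> = prob A * (\<integral>\<omega>. gI (V (Suc j) \<omega>) \<partial>M)"
    by (rule indep_int[OF A gI_meas int1])
  also have "(\<integral>\<omega>. gI (V (Suc j) \<omega>) \<partial>M) = (\<integral>\<omega>. indicator (Rs (Suc j)) \<omega> \<partial>M)"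
    by (rule Bochner_Integration.integral_cong[OF refl eq1])
  also have "\<dots> = q" using Rsev prob_R[of "Suc j"] unfolding Rs_def by (simp add: emeasure_finite)
  finally show ?thesis .
qed

lemma Bs_disj_aux: "m < n \<Longrightarrow> Bs N m \<inter> Bs N n = {}"
  unfolding Bs_def P_def Rne_def Rs_def by auto

lemma Bs_disj: "disjoint_family (Bs N)"
  unfolding disjoint_family_on_def
proof safe
  fix m n x assume "m \<noteq> n" "x \<in> Bs N m" "x \<in> Bs N n"
  then show "x \<in> {}" using Bs_disj_aux[of m n N] Bs_disj_aux[of n m N] by (cases "m < n") auto
qed

lemma EN_Union: "EN N = (\<Union>j. Bs N j)"
proof (rule set_eqI)
  fix \<omega>
  show "\<omega> \<in> EN N \<longleftrightarrow> \<omega> \<in> (\<Union>j. Bs N j)"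
  proof
    assume "\<omega> \<in> (\<Union>j. Bs N j)" then show "\<omega> \<in> EN N"
      unfolding Bs_def P_def G_def Rs_def EN_def by auto
  next
    assume w: "\<omega> \<in> EN N"
    let ?Q = "\<lambda>j. enat (Suc j) \<le> N \<omega> \<and> R (Suc j) \<omega> = Rmax"
    from w have ex: "\<exists>j. ?Q j" and sp: "\<omega> \<in> space M" unfolding EN_def by auto
    define j0 where "j0 = (LEAST j. ?Q j)"
    have Q0: "?Q j0" unfolding j0_def using ex by (rule LeastI_ex)
    have "\<forall>k\<in>{1..j0}. R k \<omega> \<noteq> Rmax"
    proof (intro ballI notI)
      fix k assume k: "k \<in> {1..j0}" and Rk: "R k \<omega> = Rmax"
      have "enat (Suc (k - 1)) \<le> N \<omega>"
        using Q0 k by (metis Suc_diff_1 atLeastAtMost_iff dual_order.trans enat_ord_simps(1) le_SucI less_eq_Suc_le zero_less_one)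
      moreover have "R (Suc (k - 1)) \<omega> = Rmax" using k Rk by simp
      ultimately have "j0 \<le> k - 1" unfolding j0_def by (intro Least_le) simp
      then show False using k by auto
    qed
    then have "\<omega> \<in> Bs N j0" using Q0 sp unfolding Bs_def P_def G_def Rne_def Rs_def by auto
    then show "\<omega> \<in> (\<Union>j. Bs N j)" by auto
  qed
qed

lemma prob_EN:
  assumes st: "ST N"
  shows "(\<lambda>j. prob (P N j)) sums (prob (EN N) / q)" "EN N \<in> events"
proof -
  have Bev: "\<And>j. Bs N j \<in> events"
  proof -
    fix j
    have "P N j \<in> events" using P_Fm[OF st, of j] Fm_events by auto
    then show "Bs N j \<in> events" unfolding Bs_def using Rs_ev[of "Suc j"] by auto
  qed
  have "(\<lambda>j. prob (Bs N j)) sums prob (\<Union>j. Bs N j)"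
    using Bev Bs_disj by (intro finite_measure_UNION) auto
  moreover have "\<And>j. prob (Bs N j) = prob (P N j) * q"
    unfolding Bs_def by (rule indep_event[OF P_Fm[OF st]])
  ultimately have "(\<lambda>j. prob (P N j) * q) sums prob (EN N)" by (simp add: EN_Union)
  then have "(\<lambda>j. prob (P N j) * q / q) sums (prob (EN N) / q)" by (rule sums_divide)
  then show "(\<lambda>j. prob (P N j)) sums (prob (EN N) / q)" using q by simp
  show "EN N \<in> events" unfolding EN_Union using Bev by auto
qed

lemma int_UU:
  assumes st: "ST N" and fin: "AE \<omega> in M. N \<omega> \<noteq> \<infinity>"
  shows "(\<integral>\<omega>. stopped UU N \<omega> \<partial>M) = W * Tdata * Rmax * prob (EN N)"
proof -
  have ENev: "EN N \<in> events" using prob_EN(2)[OF st] .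
  have ae: "AE \<omega> in M. stopped UU N \<omega> = W * Tdata * Rmax * indicator (EN N) \<omega>"
    using AE_good fin AE_space
  proof eventually_elim
    case (elim \<omega>)
    then obtain n where n: "N \<omega> = enat n" by (cases "N \<omega>") auto
    have n1: "n \<ge> 1" using st_ge1[OF st elim(3)] n by (simp add: one_enat_def)
    have gd: "\<And>i. i \<ge> 1 \<Longrightarrow> \<Gamma> \<le> SNR i \<omega> \<and> (R i \<omega> = 0 \<or> R i \<omega> = Rmax)"
      using elim(1) unfolding good_def by auto
    have img: "(\<lambda>i. Rmet SNR beta i \<omega> * (if SNR i \<omega> \<ge> \<Gamma> then 1 else 0)) ` {1..n} = (\<lambda>i. R i \<omega>) ` {1..n}"
      using gd by (intro image_cong) (auto simp: R_def)
    have UUe: "stopped UU N \<omega> = W * Tdata * Max ((\<lambda>i. R i \<omega>) ` {1..n})"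
      unfolding stopped_def n UU_def Ureward_def using img by simp
    show ?case
    proof (cases "\<exists>i\<in>{1..n}. R i \<omega> = Rmax")
      case True
      have "Max ((\<lambda>i. R i \<omega>) ` {1..n}) = Rmax"
      proof (rule Max_eqI)
        fix y assume "y \<in> (\<lambda>i. R i \<omega>) ` {1..n}"
        then show "y \<le> Rmax" using gd Rmax by force
      next
        show "Rmax \<in> (\<lambda>i. R i \<omega>) ` {1..n}" using True by force
      qed simp
      moreover have "\<omega> \<in> EN N"
      proof -
        obtain i where i: "i \<in> {1..n}" "R i \<omega> = Rmax" using True by blast
        then have "enat (Suc (i - 1)) \<le> N \<omega> \<and> R (Suc (i - 1)) \<omega> = Rmax" using n by auto
        then show ?thesis unfolding EN_def using elim(3) by blast
      qed
      ultimately show ?thesis using UUe by simp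
    next
      case False
      then have "(\<lambda>i. R i \<omega>) ` {1..n} = {0}" using gd n1 by force
      moreover have "\<omega> \<notin> EN N"
      proof
        assume "\<omega> \<in> EN N"
        then obtain j where "enat (Suc j) \<le> N \<omega>" "R (Suc j) \<omega> = Rmax" unfolding EN_def by blast
        then show False using False n by auto
      qed
      ultimately show ?thesis using UUe by simp
    qed
  qed
  have m1: "stopped UU N \<in> borel_measurable M" by (rule stopped_meas[OF st UU_meas])
  have m2: "(\<lambda>\<omega>. W * Tdata * Rmax * indicator (EN N) \<omega>) \<in> borel_measurable M"
    using ENev by measurable
  have "(\<integral>\<omega>. stopped UU N \<omega> \<partial>M) = (\<integral>\<omega>. W * Tdata * Rmax * indicator (EN N) \<omega> \<partial>M)"
    by (rule integral_cong_AE[OF m1 m2 ae])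
  also have "\<dots> = W * Tdata * Rmax * prob (EN N)" using ENev by (simp add: emeasure_finite)
  finally show ?thesis .
qed

end



lemma ratio_arith:
  fixes a p s C D q :: real
  assumes a: "a > 0" and C: "C > 0" and D: "D > 0" and q: "q > 0"
    and p0: "0 \<le> p" and p1: "p \<le> 1" and ps: "p \<le> q * s" and s: "s \<ge> 0"
  shows "a * p / (C + D * s) \<le> q * a / (D + q * C)"
proof -
  have y: "C + D * s > 0" using C D s by (simp add: add_pos_nonneg)
  have v: "D + q * C > 0" using C D q by (intro add_pos_pos mult_pos_pos)
  have k1: "a * p * D \<le> a * (q * s) * D" using ps a D by (intro mult_right_mono mult_left_mono) auto
  have k2: "a * p * (q * C) \<le> a * 1 * (q * C)" using p1 a C q by (intro mult_right_mono mult_left_mono) auto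
  have key: "(a * p) * (D + q * C) \<le> (q * a) * (C + D * s)"
    using k1 k2 by (simp add: algebra_simps)
  show ?thesis using key y v by (simp add: divide_le_eq le_divide_eq)
qed

context csm begin

lemma TT_nonneg_ae:
  assumes fin: "AE \<omega> in M. N \<omega> \<noteq> \<infinity>"
  shows "AE \<omega> in M. stopped TT N \<omega> \<ge> 0"
  using AE_good fin
proof eventually_elim
  case (elim \<omega>)
  then obtain n where n: "N \<omega> = enat n" by (cases "N \<omega>") auto
  have "(\<Sum>i=1..n. c i \<omega>) \<ge> 0" using elim(1) unfolding good_def by (intro sum_nonneg) auto
  then show ?case unfolding stopped_def n TT_c using C_pos by simp
qed

lemma classC_facts:
  assumes cC: "classC M (cs_filt M SNR beta Y Z) TT N"
  shows "summable (\<lambda>j. prob (G N j))"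
    and "(\<integral>\<omega>. stopped TT N \<omega> \<partial>M) = C + D * (\<Sum>j. prob (G N j))"
proof -
  from cC have st: "ST N" and fin: "AE \<omega> in M. N \<omega> \<noteq> \<infinity>" and int: "integrable M (stopped TT N)"
    unfolding classC_def by auto
  have nn: "AE \<omega> in M. stopped TT N \<omega> \<ge> 0" by (rule TT_nonneg_ae[OF fin])
  have "(\<integral>\<^sup>+\<omega>. ennreal (stopped TT N \<omega>) \<partial>M) \<le> (\<integral>\<^sup>+\<omega>. ennreal (norm (stopped TT N \<omega>)) \<partial>M)"
    by (intro nn_integral_mono) (auto intro: ennreal_leI)
  also have "\<dots> < \<infinity>" using int by (simp add: integrable_iff_bounded)
  finally have lt: "ennreal C + ennreal D * (\<Sum>j. ennreal (prob (G N j))) < \<infinity>"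
    using nn_TT[OF st fin] by simp
  have "(\<Sum>j. ennreal (prob (G N j))) \<noteq> \<top>"
  proof
    assume "(\<Sum>j. ennreal (prob (G N j))) = \<top>"
    then have "ennreal D * (\<Sum>j. ennreal (prob (G N j))) = \<top>" using D_pos by (simp add: ennreal_mult_top)
    then show False using lt by simp
  qed
  then show sm: "summable (\<lambda>j. prob (G N j))" by (intro summable_suminf_not_top) auto
  have S: "(\<Sum>j. ennreal (prob (G N j))) = ennreal (\<Sum>j. prob (G N j))"
    using sm by (intro suminf_ennreal2) auto
  have s0: "(\<Sum>j. prob (G N j)) \<ge> 0" using sm by (intro suminf_nonneg) auto
  have "(\<integral>\<omega>. stopped TT N \<omega> \<partial>M) = enn2real (\<integral>\<^sup>+\<omega>. ennreal (stopped TT N \<omega>) \<partial>M)"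
    by (rule integral_eq_nn_integral[OF stopped_meas[OF st TT_meas] nn])
  also have "\<dots> = enn2real (ennreal (C + D * (\<Sum>j. prob (G N j))))"
  proof -
    have "ennreal (C + D * (\<Sum>j. prob (G N j))) = ennreal C + ennreal D * ennreal (\<Sum>j. prob (G N j))"
      using C_pos D_pos s0 by (subst ennreal_plus) (auto simp: ennreal_mult)
    then show ?thesis unfolding nn_TT[OF st fin] S by simp
  qed
  also have "\<dots> = C + D * (\<Sum>j. prob (G N j))" using C_pos D_pos s0 by (intro enn2real_ennreal) simp
  finally show "(\<integral>\<omega>. stopped TT N \<omega> \<partial>M) = C + D * (\<Sum>j. prob (G N j))" .
qed

lemma ratio_le:
  assumes cC: "classC M (cs_filt M SNR beta Y Z) TT N"
  shows "ratio M TT UU N \<le> q * (W * Tdata * Rmax) / (D + q * C)"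
proof -
  from cC have st: "ST N" and fin: "AE \<omega> in M. N \<omega> \<noteq> \<infinity>"
    unfolding classC_def by auto
  note sm = classC_facts(1)[OF cC]
  let ?s = "\<Sum>j. prob (G N j)"
  have sP: "(\<lambda>j. prob (P N j)) sums (prob (EN N) / q)" by (rule prob_EN(1)[OF st])
  have PG: "\<And>j. prob (P N j) \<le> prob (G N j)"
    unfolding P_def using st_ge_ev[OF st] by (intro finite_measure_mono) (auto simp: G_def)
  have "(\<Sum>j. prob (P N j)) \<le> ?s"
    by (rule suminf_le[OF PG sums_summable[OF sP] sm])
  then have le: "prob (EN N) / q \<le> ?s" using sums_unique[OF sP] by simp
  have "prob (EN N) = q * (prob (EN N) / q)" using q by simp
  also have "\<dots> \<le> q * ?s" using le q by (intro mult_left_mono) auto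
  finally have ps: "prob (EN N) \<le> q * ?s" .
  have s0: "?s \<ge> 0" using sm by (intro suminf_nonneg) auto
  have "ratio M TT UU N = (W * Tdata * Rmax) * prob (EN N) / (C + D * ?s)"
    unfolding ratio_def int_UU[OF st fin] classC_facts(2)[OF cC] by simp
  also have "\<dots> \<le> q * (W * Tdata * Rmax) / (D + q * C)"
    using W Tdata Rmax C_pos D_pos q ps s0 by (intro ratio_arith) auto
  finally show ?thesis .
qed

end



lemma fe_ge1: "first_exceed X t \<omega> \<ge> 1"
proof (cases "\<exists>n\<ge>1. X n \<omega> \<ge> t")
  case True
  then have "(LEAST n. n \<ge> 1 \<and> X n \<omega> \<ge> t) \<ge> 1" by (metis (mono_tags, lifting) LeastI)
  then show ?thesis using True unfolding first_exceed_def by (simp add: one_enat_def)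
next
  case False
  have "first_exceed X t \<omega> = \<infinity>" unfolding first_exceed_def using False by (rule if_not_P)
  then show ?thesis by simp
qed

lemma fe_ge: "enat (Suc j) \<le> first_exceed X t \<omega> \<longleftrightarrow> (\<forall>k\<in>{1..j}. X k \<omega> < t)"
proof (cases "\<exists>n\<ge>1. X n \<omega> \<ge> t")
  case True
  let ?L = "LEAST n. n \<ge> 1 \<and> X n \<omega> \<ge> t"
  have L: "?L \<ge> 1 \<and> X ?L \<omega> \<ge> t" using True by (metis (mono_tags, lifting) LeastI)
  have fe: "first_exceed X t \<omega> = enat ?L" using True unfolding first_exceed_def by simp
  show ?thesis
  proof
    assume "enat (Suc j) \<le> first_exceed X t \<omega>"
    then have lt: "j < ?L" using fe by simp
    show "\<forall>k\<in>{1..j}. X k \<omega> < t"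
    proof
      fix k assume k: "k \<in> {1..j}"
      show "X k \<omega> < t"
      proof (rule ccontr)
        assume "\<not> X k \<omega> < t"
        then have "?L \<le> k" using k by (intro Least_le) auto
        then show False using k lt by auto
      qed
    qed
  next
    assume all: "\<forall>k\<in>{1..j}. X k \<omega> < t"
    have "\<not> ?L \<le> j"
    proof
      assume "?L \<le> j"
      then have "?L \<in> {1..j}" using L by auto
      then show False using all L by force
    qed
    then show "enat (Suc j) \<le> first_exceed X t \<omega>" using fe by simp
  qed
next
  case False
  have "first_exceed X t \<omega> = \<infinity>" unfolding first_exceed_def using False by (rule if_not_P)
  have all: "\<forall>k\<in>{1..j}. X k \<omega> < t"
  proof
    fix k assume k: "k \<in> {1..j}"
    show "X k \<omega> < t"
    proof (rule ccontr)
      assume "\<not> X k \<omega> < t"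
      then have "k \<ge> 1 \<and> X k \<omega> \<ge> t" using k by auto
      then show False using False by blast
    qed
  qed
  show ?thesis using all \<open>first_exceed X t \<omega> = \<infinity>\<close> by simp
qed

lemma fe_eq: "first_exceed X t \<omega> = enat n \<longleftrightarrow> (1 \<le> n \<and> t \<le> X n \<omega> \<and> (\<forall>k\<in>{1..<n}. X k \<omega> < t))"
proof
  assume fe: "first_exceed X t \<omega> = enat n"
  then have ex: "\<exists>n\<ge>1. X n \<omega> \<ge> t" unfolding first_exceed_def by (auto split: if_splits)
  let ?L = "LEAST n. n \<ge> 1 \<and> X n \<omega> \<ge> t"
  have Ln: "?L = n" using fe ex unfolding first_exceed_def by simp
  have L: "?L \<ge> 1 \<and> X ?L \<omega> \<ge> t" using ex by (metis (mono_tags, lifting) LeastI)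
  have "\<forall>k\<in>{1..<n}. X k \<omega> < t"
  proof
    fix k assume k: "k \<in> {1..<n}"
    show "X k \<omega> < t"
    proof (rule ccontr)
      assume "\<not> X k \<omega> < t"
      then have "?L \<le> k" using k by (intro Least_le) auto
      then show False using k Ln by auto
    qed
  qed
  then show "1 \<le> n \<and> t \<le> X n \<omega> \<and> (\<forall>k\<in>{1..<n}. X k \<omega> < t)" using L Ln by simp
next
  assume H: "1 \<le> n \<and> t \<le> X n \<omega> \<and> (\<forall>k\<in>{1..<n}. X k \<omega> < t)"
  then have ex: "\<exists>n\<ge>1. X n \<omega> \<ge> t" by auto
  have "(LEAST n. n \<ge> 1 \<and> X n \<omega> \<ge> t) = n"
  proof (rule Least_equality)
    show "n \<ge> 1 \<and> X n \<omega> \<ge> t" using H by simp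
  next
    fix m assume m: "m \<ge> 1 \<and> X m \<omega> \<ge> t"
    show "n \<le> m"
    proof (rule ccontr)
      assume "\<not> n \<le> m"
      then have "m \<in> {1..<n}" using m by auto
      then show False using H m by force
    qed
  qed
  then show "first_exceed X t \<omega> = enat n" using ex unfolding first_exceed_def by simp
qed

context csm begin

definition "\<theta> = Rmax / (1 + D / (q * C))"
abbreviation "Nst \<equiv> first_exceed R \<theta>"

lemma theta: "0 < \<theta>" "\<theta> \<le> Rmax"
proof -
  have phi: "D / (q * C) > 0" using D_pos q C_pos by simp
  show "0 < \<theta>" unfolding \<theta>_def using Rmax phi by simp
  show "\<theta> \<le> Rmax" unfolding \<theta>_def using Rmax phi by (simp add: divide_le_eq)
qed

lemma st_Nst: "ST Nst"
  unfolding stopping_time_ge1_def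
proof safe
  fix n
  show "{\<omega>\<in>space M. Nst \<omega> = enat n} \<in> cs_filt M SNR beta Y Z n"
    unfolding sets_Fm[symmetric]
  proof (cases "n \<ge> 1")
    case False
    then have e0: "{\<omega>\<in>space M. Nst \<omega> = enat n} = {}" by (auto simp: fe_eq)
    show "{\<omega>\<in>space M. Nst \<omega> = enat n} \<in> sets (Fm n)" unfolding e0 by (rule sets.empty_sets)
  next
    case True
    have eq: "{\<omega>\<in>space M. Nst \<omega> = enat n} = {\<omega>\<in>space (Fm n). \<theta> \<le> R n \<omega>} \<inter>
        (space (Fm n) - (\<Union>k\<in>{1..<n}. {\<omega>\<in>space (Fm n). \<theta> \<le> R k \<omega>}))"
      unfolding space_Fm fe_eq using True by (auto simp: not_le)
    have "{\<omega>\<in>space (Fm n). \<theta> \<le> R n \<omega>} \<in> sets (Fm n)" using R_Fm[OF True order_refl] by measurable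
    moreover have "\<And>k. k \<in> {1..<n} \<Longrightarrow> {\<omega>\<in>space (Fm n). \<theta> \<le> R k \<omega>} \<in> sets (Fm n)"
      using R_Fm by measurable
    ultimately show "{\<omega>\<in>space M. Nst \<omega> = enat n} \<in> sets (Fm n)"
      unfolding eq by (intro sets.Int sets.Diff sets.top sets.finite_UN) auto
  qed
qed (rule fe_ge1)

lemma Rne_ev: "Rne j \<in> events" using Rne_Fm Fm_events by auto

lemma prob_Rne: "prob (Rne j) = (1 - q) ^ j"
proof (induction j)
  case 0
  have "Rne 0 = space M" unfolding Rne_def by auto
  then show ?case by (simp add: prob_space)
next
  case (Suc j)
  have ins: "{1..Suc j} = insert (Suc j) {1..j}" by auto
  have eq: "Rne (Suc j) = Rne j - Rs (Suc j)"
    unfolding Rne_def Rs_def ins by blast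
  have "prob (Rne (Suc j)) = prob (Rne j) - prob (Rne j \<inter> Rs (Suc j))"
    unfolding eq using Rne_ev Rs_ev[of "Suc j"] by (intro finite_measure_Diff') auto
  also have "\<dots> = prob (Rne j) - prob (Rne j) * q" using indep_event[OF Rne_Fm] by simp
  finally show ?case using Suc by (simp add: algebra_simps)
qed

lemma G_Nst_ae: "AE \<omega> in M. (\<omega> \<in> G Nst j \<longleftrightarrow> \<omega> \<in> Rne j)"
  using AE_good
proof eventually_elim
  case (elim \<omega>)
  have "\<And>k. k \<in> {1..j} \<Longrightarrow> (R k \<omega> < \<theta> \<longleftrightarrow> R k \<omega> \<noteq> Rmax)"
    using elim theta unfolding good_def by force
  then show ?case unfolding G_def Rne_def fe_ge by auto
qed

lemma prob_G_Nst: "prob (G Nst j) = (1 - q) ^ j"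
proof -
  have "prob (G Nst j) = prob (Rne j)"
    using G_Nst_ae st_ge_ev[OF st_Nst] Rne_ev unfolding G_def by (intro measure_eq_AE) auto
  then show ?thesis using prob_Rne by simp
qed

lemma prob_P_Nst: "prob (P Nst j) = (1 - q) ^ j"
proof -
  have ae: "AE \<omega> in M. (\<omega> \<in> P Nst j \<longleftrightarrow> \<omega> \<in> Rne j)"
    using G_Nst_ae[of j] unfolding P_def by eventually_elim auto
  have "prob (P Nst j) = prob (Rne j)"
    using P_Fm[OF st_Nst, of j] Fm_events Rne_ev by (intro measure_eq_AE[OF ae]) auto
  then show ?thesis using prob_Rne by simp
qed

lemma fin_Nst: "AE \<omega> in M. Nst \<omega> \<noteq> \<infinity>"
proof -
  let ?I = "{\<omega>\<in>space M. Nst \<omega> = \<infinity>}"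
  have Iev: "?I \<in> events" using st_meas[OF st_Nst] by measurable
  have le: "\<And>j. prob ?I \<le> (1 - q) ^ j"
  proof -
    fix j
    have "prob ?I \<le> prob (G Nst j)"
      using st_ge_ev[OF st_Nst] unfolding G_def by (intro finite_measure_mono) auto
    then show "prob ?I \<le> (1 - q) ^ j" using prob_G_Nst by simp
  qed
  have "(\<lambda>j. (1 - q) ^ j) \<longlonglongrightarrow> 0" using q by (intro LIMSEQ_realpow_zero) auto
  then have "prob ?I \<le> 0" using le by (intro LIMSEQ_le_const) auto
  then have "prob ?I = 0" using measure_nonneg[of M ?I] by linarith
  then have "prob (space M - ?I) = 1" using prob_compl[OF Iev] by simp
  then have "AE \<omega> in M. \<omega> \<in> space M - ?I" by (rule AE_prob_1)
  then show ?thesis by eventually_elim auto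
qed

lemma geom: "(\<lambda>j. (1 - q) ^ j) sums (1 / q)"
proof -
  have "norm (1 - q) < 1" using q by auto
  from geometric_sums[OF this] show ?thesis by simp
qed

lemma classC_Nst: "classC M (cs_filt M SNR beta Y Z) TT Nst"
  and int_TT_Nst: "(\<integral>\<omega>. stopped TT Nst \<omega> \<partial>M) = C + D / q"
proof -
  have S: "(\<Sum>j. ennreal (prob (G Nst j))) = ennreal (1 / q)"
    unfolding prob_G_Nst using geom q by (subst suminf_ennreal2) (auto simp: sums_iff)
  have nn: "(\<integral>\<^sup>+\<omega>. ennreal (stopped TT Nst \<omega>) \<partial>M) = ennreal (C + D / q)"
  proof -
    have "ennreal (C + D / q) = ennreal C + ennreal D * ennreal (1 / q)"
      using C_pos D_pos q by (subst ennreal_plus) (auto simp: ennreal_mult[symmetric])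
    then show ?thesis unfolding nn_TT[OF st_Nst fin_Nst] S by simp
  qed
  have int: "integrable M (stopped TT Nst)"
    by (rule integrableI_nonneg[OF stopped_meas[OF st_Nst TT_meas] TT_nonneg_ae[OF fin_Nst]]) (simp add: nn)
  show "classC M (cs_filt M SNR beta Y Z) TT Nst"
    unfolding classC_def using st_Nst fin_Nst int by auto
  have "(\<integral>\<omega>. stopped TT Nst \<omega> \<partial>M) = enn2real (\<integral>\<^sup>+\<omega>. ennreal (stopped TT Nst \<omega>) \<partial>M)"
    by (rule integral_eq_nn_integral[OF stopped_meas[OF st_Nst TT_meas] TT_nonneg_ae[OF fin_Nst]])
  also have "\<dots> = C + D / q" unfolding nn using C_pos D_pos q by (intro enn2real_ennreal) simp
  finally show "(\<integral>\<omega>. stopped TT Nst \<omega> \<partial>M) = C + D / q" .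
qed

lemma prob_EN_Nst: "prob (EN Nst) = 1"
proof -
  have "(\<lambda>j. (1 - q) ^ j) sums (prob (EN Nst) / q)"
    using prob_EN(1)[OF st_Nst] unfolding prob_P_Nst .
  then have "prob (EN Nst) / q = 1 / q" using geom by (rule sums_unique2)
  then show ?thesis using q by (simp add: field_simps)
qed

lemma ratio_Nst: "ratio M TT UU Nst = q * (W * Tdata * Rmax) / (D + q * C)"
proof -
  have "ratio M TT UU Nst = (W * Tdata * Rmax) / (C + D / q)"
    unfolding ratio_def int_UU[OF st_Nst fin_Nst] int_TT_Nst prob_EN_Nst by simp
  also have "\<dots> = q * (W * Tdata * Rmax) / (D + q * C)"
    using q by (simp add: field_simps)
  finally show ?thesis .
qed

lemma lam_main: "lam_star M (cs_filt M SNR beta Y Z) TT UU = q * (W * Tdata * Rmax) / (D + q * C)"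
  unfolding lam_star_def
proof (rule cSup_eq_maximum)
  show "q * (W * Tdata * Rmax) / (D + q * C) \<in> {ratio M TT UU N |N. classC M (cs_filt M SNR beta Y Z) TT N}"
    using classC_Nst ratio_Nst by force
next
  fix x assume "x \<in> {ratio M TT UU N |N. classC M (cs_filt M SNR beta Y Z) TT N}"
  then show "x \<le> q * (W * Tdata * Rmax) / (D + q * C)" using ratio_le by auto
qed

end


theorem corollary1:
  fixes M :: "'a measure"
    and SNR beta Y Z :: "nat \<Rightarrow> 'a \<Rightarrow> real"
    and Tsyn Tsib Tra Tdata W \<Gamma> Rmax q :: real
    and L K :: nat
  assumes M: "prob_space M"
    and Tsyn: "Tsyn > 0" and Tsib: "Tsib \<ge> Tsyn"
    and K: "K \<ge> 1" "Tsib = real K * Tsyn"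
    and Tra: "Tra > 0" and Tdata: "Tdata > 0" and W: "W > 0" and L: "L \<ge> 1"
    and iid_indep: "prob_space.indep_vars M (\<lambda>_. borel)
          (\<lambda>i \<omega>. (SNR i \<omega>, beta i \<omega>, Y i \<omega>, Z i \<omega>)) {1..}"
    and iid_dist: "\<forall>i\<ge>1. distr M borel (\<lambda>\<omega>. (SNR i \<omega>, beta i \<omega>, Y i \<omega>, Z i \<omega>))
                       = distr M borel (\<lambda>\<omega>. (SNR 1 \<omega>, beta 1 \<omega>, Y 1 \<omega>, Z 1 \<omega>))"
    and SNR_nonneg: "\<forall>i\<ge>1. AE \<omega> in M. SNR i \<omega> \<ge> 0"
    and beta_range: "\<forall>i\<ge>1. AE \<omega> in M. 0 \<le> beta i \<omega> \<and> beta i \<omega> \<le> 1"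
    and Y_nonneg: "\<forall>i\<ge>1. AE \<omega> in M. Y i \<omega> \<ge> 0"
    and Y_mean: "\<forall>i\<ge>1. integrable M (Y i) \<and> (\<integral>\<omega>. Y i \<omega> \<partial>M) = Tsyn / 2"
    and Z_unif: "\<forall>i\<ge>1. \<forall>j<K. measure M {\<omega>\<in>space M. Z i \<omega> = real j * Tsyn} = 1 / real K"
    and Z_indep: "\<forall>i\<ge>1. prob_space.indep_var M borel (Z i) borel (SNR i)"
    and SNR_Gamma: "\<forall>i\<ge>1. AE \<omega> in M. SNR i \<omega> \<ge> \<Gamma>"
    and Rmax: "Rmax > 0" and q: "0 < q" "q \<le> 1"
    and R_dist: "\<forall>i\<ge>1. measure M {\<omega>\<in>space M. Rmet SNR beta i \<omega> = Rmax} = q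
                     \<and> measure M {\<omega>\<in>space M. Rmet SNR beta i \<omega> = 0} = 1 - q"
  shows "let T = Tcost SNR Y Z Tsyn L \<Gamma> Tra Tdata;
             U = Ureward SNR beta \<Gamma> W Tdata;
             F = cs_filt M SNR beta Y Z;
             D = (real L - 1/2) * Tsyn + (Tsib - Tsyn) / 2;
             \<phi> = D / (q * (Tra + Tdata));
             Nstar = first_exceed (Rmet SNR beta) (Rmax / (1 + \<phi>))
         in lam_star M F T U = q * W * Tdata * Rmax / (D + q * (Tra + Tdata))
            \<and> classC M F T Nstar
            \<and> ratio M T U Nstar = lam_star M F T U"
proof -
  interpret csm M SNR beta Y Z Tsyn Tsib Tra Tdata W \<Gamma> Rmax q L K
    by (intro csm.intro csm_axioms.intro) (rule assms)+
  have eT: "Tcost SNR Y Z Tsyn L \<Gamma> Tra Tdata = TT" by (simp add: TT_def)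
  have eU: "Ureward SNR beta \<Gamma> W Tdata = UU" by (simp add: UU_def)
  have eD: "(real L - 1/2) * Tsyn + (Tsib - Tsyn) / 2 = D" by (simp add: D_def)
  have eC: "Tra + Tdata = C" by (simp add: C_def)
  have eN: "first_exceed (Rmet SNR beta) (Rmax / (1 + D / (q * C))) = Nst"
    by (simp add: \<theta>_def R_def)
  have l: "lam_star M (cs_filt M SNR beta Y Z) TT UU = q * W * Tdata * Rmax / (D + q * C)"
    using lam_main by (simp add: mult.assoc)
  show ?thesis unfolding Let_def eT eU eD eC eN
    using l classC_Nst ratio_Nst lam_main by simp
qed


end
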